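(* Let $\mu,\nu$ be laws of noisy processes with noise variances $\sigma_\mu^2,\sigma_\nu^2>0$. Let $\tilde I\subseteq I$ be dense in $I$. If $P_{\mathbf x}\mu=P_{\mathbf x}\nu$ for all $\mathbf x\in\tilde I$, then $P_{\mathbf x}\mu=P_{\mathbf x}\nu$ for all $\mathbf x\in I$, i.e. $\mu=\nu$. Moreover, if $\mu$ and $\nu$ are Gaussian noisy processes, the same conclusion holds if $\tilde I\subseteq\mathbb R^n$ is merely dense in $\mathbb R^n$ for some fixed $n\ge2$.
   Context: $I=\bigcup_{n\ge1}\mathbb R^n$ is the set of finite tuples of inputs (entries possibly repeated), topologised as the disjoint union of the Euclidean spaces $\mathbb R^n$. A stochastic process $f$ on $\mathbb R$ is noisy with noise variance $\sigma^2>0$ if $f=f^{\mathrm s}+f^{\mathrm n}$ with $f^{\mathrm s},f^{\mathrm n}$ independent, $f^{\mathrm s}$ (smooth part) having continuous sample paths, and $(f^{\mathrm n}(x_1),\dots,f^{\mathrm n}(x_n))\sim\mathcal N(\mathbf 0,\sigma^2\mathbf I_n)$ for all pairwise distinct $x_1,\dots,x_n$. It is a Gaussian noisy process if $f^{\mathrm s}$ is a Gaussian process. Convention: for a noisy process with law $\mu$ and $\mathbf x=(x_1,\dots,x_n)\in I$, $P_{\mathbf x}\mu$ denotes the law of $(f^{\mathrm s}(x_1),\dots,f^{\mathrm s}(x_n))+\boldsymbol\varepsilon$ with $\boldsymbol\varepsilon\sim\mathcal N(\mathbf 0,\sigma^2\mathbf I_n)$ independent of $f^{\mathrm s}$; two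 noisy processes are equal ($\mu=\nu$) iff $P_{\mathbf x}\mu=P_{\mathbf x}\nu$ for all $\mathbf x\in I$. *)

theory Defs
  imports "HOL-Probability.Probability"
begin

text \<open>A noisy process is represented by a probability space M, the smooth part
  fs (a random function with continuous sample paths, each evaluation measurable)
  and the noise standard deviation s > 0 (noise variance s^2).  Finite input
  tuples in I are nonempty real lists.\<close>

definition noisy_process :: "'a measure \<Rightarrow> ('a \<Rightarrow> real \<Rightarrow> real) \<Rightarrow> real \<Rightarrow> bool" where
  "noisy_process M fs s \<longleftrightarrow> prob_space M \<and> s > 0 \<and>
     (\<forall>x. (\<lambda>\<omega>. fs \<omega> x) \<in> borel_measurable M) \<and>
     (\<forall>\<omega>\<in>space M. continuous_on UNIV (fs \<omega>))"

definition noise :: "nat \<Rightarrow> real \<Rightarrow> (nat \<Rightarrow> real) measure" where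
  "noise n s = PiM {..<n} (\<lambda>_. density lborel (normal_density 0 s))"

definition Px :: "'a measure \<Rightarrow> ('a \<Rightarrow> real \<Rightarrow> real) \<Rightarrow> real \<Rightarrow> real list \<Rightarrow> (nat \<Rightarrow> real) measure" where
  "Px M fs s xs = distr (M \<Otimes>\<^sub>M noise (length xs) s) (PiM {..<length xs} (\<lambda>_. borel))
     (\<lambda>(\<omega>, e). \<lambda>i\<in>{..<length xs}. fs \<omega> (xs ! i) + e i)"

definition real_gaussian :: "'a measure \<Rightarrow> ('a \<Rightarrow> real) \<Rightarrow> bool" where
  "real_gaussian M X \<longleftrightarrow>
     (\<exists>m s. s > 0 \<and> distributed M lborel X (normal_density m s)) \<or>
     (X \<in> borel_measurable M \<and> (\<exists>c. AE \<omega> in M. X \<omega> = c))"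

definition gaussian_process :: "'a measure \<Rightarrow> ('a \<Rightarrow> real \<Rightarrow> real) \<Rightarrow> bool" where
  "gaussian_process M fs \<longleftrightarrow>
     (\<forall>xs cs. length cs = length xs \<longrightarrow>
        real_gaussian M (\<lambda>\<omega>. \<Sum>i<length xs. cs ! i * fs \<omega> (xs ! i)))"

text \<open>J is dense in R^n (tuples of length n; sup-metric, same topology as Euclidean).\<close>
definition dense_in_Rn :: "nat \<Rightarrow> real list set \<Rightarrow> bool" where
  "dense_in_Rn n J \<longleftrightarrow> (\<forall>xs. length xs = n \<longrightarrow>
     (\<forall>e>0. \<exists>ys\<in>J. length ys = n \<and> (\<forall>i<n. \<bar>ys ! i - xs ! i\<bar> < e)))"

text \<open>J dense in I = disjoint union of the R^n, n >= 1.\<close>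
definition dense_in_I :: "real list set \<Rightarrow> bool" where
  "dense_in_I J \<longleftrightarrow> (\<forall>n\<ge>1. dense_in_Rn n J)"

end

theory Submission
  imports Defs
begin

lemma shift_nn:
  assumes [measurable]: "A \<in> sets borel"
  shows "(\<integral>\<^sup>+ x. ennreal (normal_density 0 s x) * indicator A (c + x) \<partial>lborel)
       = (\<integral>\<^sup>+ y. ennreal (normal_density c s y) * indicator A y \<partial>lborel)"
proof -
  have "(\<integral>\<^sup>+ y. ennreal (normal_density c s y) * indicator A y \<partial>lborel)
     = (\<integral>\<^sup>+ y. ennreal (normal_density c s y) * indicator A y \<partial>distr lborel borel ((+) c))"
    by (simp add: lborel_distr_plus)
  also have "\<dots> = (\<integral>\<^sup>+ x. ennreal (normal_density c s (c + x)) * indicator A (c + x) \<partial>lborel)"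
    by (subst nn_integral_distr) auto
  also have "\<dots> = (\<integral>\<^sup>+ x. ennreal (normal_density 0 s x) * indicator A (c + x) \<partial>lborel)"
    by (simp add: normal_density_def)
  finally show ?thesis by simp
qed

lemma noise_shift:
  assumes s: "0 < s"
  shows "distr (noise n s) (PiM {..<n} (\<lambda>_. borel)) (\<lambda>e. \<lambda>i\<in>{..<n}. c i + e i)
   = PiM {..<n} (\<lambda>i. density lborel (normal_density (c i) s))"
proof -
  let ?M = "\<lambda>i. density lborel (normal_density (c i) s)"
  interpret P: product_prob_space ?M
    using s by (intro product_prob_spaceI prob_space_normal_density)
  interpret P0: product_prob_space "\<lambda>_. density lborel (normal_density 0 s)"
    using s by (intro product_prob_spaceI prob_space_normal_density)
  show ?thesis
  proof (rule P.PiM_eqI)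
    show "sets (distr (noise n s) (PiM {..<n} (\<lambda>_. borel)) (\<lambda>e. \<lambda>i\<in>{..<n}. c i + e i)) = sets (PiM {..<n} ?M)"
      by (simp, intro sets_PiM_cong) auto
  next
    fix A assume A: "\<And>i. i \<in> {..<n} \<Longrightarrow> A i \<in> sets (?M i)"
    then have A'[measurable]: "\<And>i. i \<in> {..<n} \<Longrightarrow> A i \<in> sets borel" by simp
    have meas: "(\<lambda>e. \<lambda>i\<in>{..<n}. c i + e i) \<in> measurable (noise n s) (PiM {..<n} (\<lambda>_. borel))"
      unfolding noise_def by (intro measurable_restrict) auto
    have pre: "(\<lambda>e. \<lambda>i\<in>{..<n}. c i + e i) -` PiE {..<n} A \<inter> space (noise n s)
        = PiE {..<n} (\<lambda>i. {x. c i + x \<in> A i})"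
      unfolding noise_def by (auto simp: space_PiM PiE_def Pi_def extensional_def)
    have "emeasure (distr (noise n s) (PiM {..<n} (\<lambda>_. borel)) (\<lambda>e. \<lambda>i\<in>{..<n}. c i + e i)) (PiE {..<n} A)
      = emeasure (noise n s) (PiE {..<n} (\<lambda>i. {x. c i + x \<in> A i}))"
      using A' by (subst emeasure_distr[OF meas]) (auto simp: pre intro!: sets_PiM_I_finite)
    also have "\<dots> = (\<Prod>i<n. emeasure (density lborel (normal_density 0 s)) {x. c i + x \<in> A i})"
      unfolding noise_def
      by (rule P0.emeasure_PiM) auto
    also have "\<dots> = (\<Prod>i<n. emeasure (?M i) (A i))"
    proof (rule prod.cong[OF refl])
      fix i assume i: "i \<in> {..<n}"
      have [measurable]: "A i \<in> sets borel" using A' i by auto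
      have "{x. c i + x \<in> A i} \<in> sets borel" by measurable
      then show "emeasure (density lborel (normal_density 0 s)) {x. c i + x \<in> A i} = emeasure (?M i) (A i)"
      proof -
        have "indicator {x. c i + x \<in> A i} = (\<lambda>x. indicator (A i) (c i + x) :: ennreal)"
          by (auto simp: indicator_def)
        then show ?thesis using \<open>{x. c i + x \<in> A i} \<in> sets borel\<close>
          using shift_nn[of "A i" s "c i"] by (simp add: emeasure_density)
      qed
    qed
    finally show "emeasure (distr (noise n s) (PiM {..<n} (\<lambda>_. borel)) (\<lambda>e. \<lambda>i\<in>{..<n}. c i + e i)) (PiE {..<n} A)
      = (\<Prod>i\<in>{..<n}. emeasure (?M i) (A i))" by simp
  qed simp
qed
lemma PiM_density_lborel:
  fixes p :: "'i \<Rightarrow> real \<Rightarrow> real"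
  assumes I: "finite I" and ps: "\<And>i. prob_space (density lborel (p i))"
    and pm[measurable]: "\<And>i. p i \<in> borel_measurable borel"
  shows "PiM I (\<lambda>i. density lborel (p i))
       = density (PiM I (\<lambda>_. lborel)) (\<lambda>y. \<Prod>i\<in>I. ennreal (p i (y i)))"
proof -
  interpret P: product_prob_space "\<lambda>i. density lborel (p i)"
    using ps by (intro product_prob_spaceI) auto
  interpret L: product_sigma_finite "\<lambda>_::'i. lborel :: real measure" by standard
  show ?thesis
  proof (rule P.PiM_eqI[symmetric])
    show "finite I" by fact
    show "sets (density (PiM I (\<lambda>_. lborel)) (\<lambda>y. \<Prod>i\<in>I. ennreal (p i (y i)))) = sets (PiM I (\<lambda>i. density lborel (p i)))"
      by (simp, intro sets_PiM_cong) auto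
  next
    fix A assume A: "\<And>i. i \<in> I \<Longrightarrow> A i \<in> sets (density lborel (p i))"
    then have [measurable]: "\<And>i. i \<in> I \<Longrightarrow> A i \<in> sets borel" by simp
    have PA: "PiE I A \<in> sets (PiM I (\<lambda>_. lborel))"
      using A I by (intro sets_PiM_I_finite) auto
    have "emeasure (density (PiM I (\<lambda>_. lborel)) (\<lambda>y. \<Prod>i\<in>I. ennreal (p i (y i)))) (PiE I A)
       = (\<integral>\<^sup>+ y. (\<Prod>i\<in>I. ennreal (p i (y i))) * indicator (PiE I A) y \<partial>PiM I (\<lambda>_. lborel))"
      using PA I by (subst emeasure_density) auto
    also have "\<dots> = (\<integral>\<^sup>+ y. (\<Prod>i\<in>I. ennreal (p i (y i)) * indicator (A i) (y i)) \<partial>PiM I (\<lambda>_. lborel))"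
    proof (rule nn_integral_cong)
      fix y assume "y \<in> space (PiM I (\<lambda>_. lborel :: real measure))"
      then have "y \<in> extensional I" by (simp add: space_PiM PiE_def)
      then have "indicator (PiE I A) y = (\<Prod>i\<in>I. indicator (A i) (y i) :: ennreal)"
        using I by (auto simp: indicator_def PiE_def Pi_def prod_zero_iff) 
      then show "(\<Prod>i\<in>I. ennreal (p i (y i))) * indicator (PiE I A) y = (\<Prod>i\<in>I. ennreal (p i (y i)) * indicator (A i) (y i))"
        by (simp add: prod.distrib)
    qed
    also have "\<dots> = (\<Prod>i\<in>I. \<integral>\<^sup>+ x. ennreal (p i x) * indicator (A i) x \<partial>lborel)"
      using I by (subst L.product_nn_integral_prod) auto
    also have "\<dots> = (\<Prod>i\<in>I. emeasure (density lborel (p i)) (A i))"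
      by (intro prod.cong refl) (auto simp: emeasure_density)
    finally show "emeasure (density (PiM I (\<lambda>_. lborel)) (\<lambda>y. \<Prod>i\<in>I. ennreal (p i (y i)))) (PiE I A)
       = (\<Prod>i\<in>I. emeasure (density lborel (p i)) (A i))" .
  qed
qed

definition dens :: "'a measure \<Rightarrow> ('a \<Rightarrow> real \<Rightarrow> real) \<Rightarrow> real \<Rightarrow> real list \<Rightarrow> (nat \<Rightarrow> real) \<Rightarrow> real" where
  "dens M f s xs y = (\<integral>\<omega>. (\<Prod>i<length xs. normal_density (f \<omega> (xs ! i)) s (y i)) \<partial>M)"

lemma nd_le: "normal_density m s x \<le> 1 / sqrt (2 * pi * s\<^sup>2)"
proof -
  have "exp (- ((x - m)\<^sup>2 / (2 * s\<^sup>2))) \<le> 1" by simp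
  then show ?thesis unfolding normal_density_def by (simp add: divide_right_mono)
qed

lemma prod_nd_le: "(\<Prod>i\<in>I. normal_density (m i) s (x i)) \<le> (1 / sqrt (2 * pi * s\<^sup>2)) ^ card I"
proof -
  have "(\<Prod>i\<in>I. normal_density (m i) s (x i)) \<le> (\<Prod>i\<in>I. 1 / sqrt (2 * pi * s\<^sup>2))"
    by (intro prod_mono) (auto simp: nd_le)
  then show ?thesis by simp
qed

lemma Px_density:
  assumes np: "noisy_process M f s"
  shows "Px M f s xs = density (PiM {..<length xs} (\<lambda>_. lborel)) (\<lambda>y. ennreal (dens M f s xs y))"
proof -
  let ?n = "length xs"
  interpret M: prob_space M using np by (simp add: noisy_process_def)
  have s: "0 < s" using np by (simp add: noisy_process_def)
  have fm[measurable]: "\<And>x. (\<lambda>\<omega>. f \<omega> x) \<in> borel_measurable M" using np by (simp add: noisy_process_def)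
  interpret P0: product_prob_space "\<lambda>_::nat. density lborel (normal_density 0 s)"
    using s by (intro product_prob_spaceI prob_space_normal_density)
  interpret Nz: prob_space "noise ?n s" unfolding noise_def using s by (intro prob_space_PiM prob_space_normal_density)
  interpret L: product_sigma_finite "\<lambda>_::nat. lborel :: real measure" by standard
  interpret LF: finite_product_sigma_finite "\<lambda>_::nat. lborel :: real measure" "{..<?n}" by standard auto
  interpret MP: pair_sigma_finite M "PiM {..<?n} (\<lambda>_. lborel :: real measure)" by standard
  let ?q = "\<lambda>\<omega> y. \<Prod>i<?n. ennreal (normal_density (f \<omega> (xs ! i)) s (y i))"
  have qm: "(\<lambda>(\<omega>, y). ?q \<omega> y) \<in> borel_measurable (M \<Otimes>\<^sub>M PiM {..<?n} (\<lambda>_. lborel))"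
    unfolding normal_density_def by measurable
  let ?T = "PiM {..<?n} (\<lambda>_. borel) :: (nat \<Rightarrow> real) measure"
  let ?Phi = "\<lambda>(\<omega>, e). \<lambda>i\<in>{..<?n}. f \<omega> (xs ! i) + (e::nat\<Rightarrow>real) i"
  have Phim: "?Phi \<in> measurable (M \<Otimes>\<^sub>M noise ?n s) ?T"
    unfolding noise_def by (simp add: split_beta') measurable
  have qrm: "(\<lambda>\<omega>. \<Prod>i<?n. normal_density (f \<omega> (xs ! i)) s (y i)) \<in> borel_measurable M" for y
    unfolding normal_density_def by measurable
  have qint: "integrable M (\<lambda>\<omega>. \<Prod>i<?n. normal_density (f \<omega> (xs ! i)) s (y i))" for y
    using prod_nd_le[where I="{..<?n}" and s=s and x=y]
    apply (intro M.integrable_const_bound[where B="(1 / sqrt (2 * pi * s\<^sup>2)) ^ ?n"])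
    apply (auto simp: prod_nonneg qrm)
    done
  have qdens: "(\<integral>\<^sup>+\<omega>. ?q \<omega> y \<partial>M) = ennreal (dens M f s xs y)" for y
    unfolding dens_def
    by (subst nn_integral_eq_integral[symmetric]) (auto simp: qint prod_nonneg prod_ennreal intro!: nn_integral_cong)
  have shiftd: "distr (noise ?n s) ?T (\<lambda>e. \<lambda>i\<in>{..<?n}. f \<omega> (xs ! i) + e i) = density (PiM {..<?n} (\<lambda>_. lborel)) (?q \<omega>)" for \<omega>
    using noise_shift[OF s, of ?n "\<lambda>i. f \<omega> (xs ! i)"] PiM_density_lborel[of "{..<?n}" "\<lambda>i. normal_density (f \<omega> (xs ! i)) s"] s
    by (simp add: prob_space_normal_density)
  have densm: "(\<lambda>y. dens M f s xs y) \<in> borel_measurable (PiM {..<?n} (\<lambda>_. lborel))"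
    unfolding dens_def normal_density_def by measurable
  show ?thesis
  proof (rule measure_eqI)
    show "sets (Px M f s xs) = sets (density (PiM {..<?n} (\<lambda>_. lborel)) (\<lambda>y. ennreal (dens M f s xs y)))"
      unfolding Px_def by (simp, intro sets_PiM_cong) auto
  next
    fix A assume "A \<in> sets (Px M f s xs)"
    then have A: "A \<in> sets ?T" by (simp add: Px_def)
    have AL: "A \<in> sets (PiM {..<?n} (\<lambda>_. lborel :: real measure))"
      using A sets_PiM_cong[of "{..<?n}" "{..<?n}" "\<lambda>_. lborel :: real measure" "\<lambda>_. borel"] by simp
    have "emeasure (Px M f s xs) A = emeasure (M \<Otimes>\<^sub>M noise ?n s) (?Phi -` A \<inter> space (M \<Otimes>\<^sub>M noise ?n s))"
      unfolding Px_def using A by (simp add: emeasure_distr Phim)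
    also have "\<dots> = (\<integral>\<^sup>+\<omega>. emeasure (noise ?n s) (Pair \<omega> -` (?Phi -` A \<inter> space (M \<Otimes>\<^sub>M noise ?n s))) \<partial>M)"
      using A Phim by (intro Nz.emeasure_pair_measure_alt) (auto intro: measurable_sets)
    also have "\<dots> = (\<integral>\<^sup>+\<omega>. emeasure (density (PiM {..<?n} (\<lambda>_. lborel)) (?q \<omega>)) A \<partial>M)"
    proof (rule nn_integral_cong)
      fix \<omega> assume w: "\<omega> \<in> space M"
      have meas: "(\<lambda>e. \<lambda>i\<in>{..<?n}. f \<omega> (xs ! i) + e i) \<in> measurable (noise ?n s) ?T"
        unfolding noise_def by measurable
      have "Pair \<omega> -` (?Phi -` A \<inter> space (M \<Otimes>\<^sub>M noise ?n s)) = (\<lambda>e. \<lambda>i\<in>{..<?n}. f \<omega> (xs ! i) + e i) -` A \<inter> space (noise ?n s)"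
        using w by (auto simp: space_pair_measure)
      then show "emeasure (noise ?n s) (Pair \<omega> -` (?Phi -` A \<inter> space (M \<Otimes>\<^sub>M noise ?n s))) = emeasure (density (PiM {..<?n} (\<lambda>_. lborel)) (?q \<omega>)) A"
        using A meas by (simp add: shiftd[symmetric] emeasure_distr)
    qed
    also have "\<dots> = (\<integral>\<^sup>+\<omega>. \<integral>\<^sup>+y. ?q \<omega> y * indicator A y \<partial>PiM {..<?n} (\<lambda>_. lborel) \<partial>M)"
      using AL qm by (intro nn_integral_cong) (simp add: emeasure_density)
    also have "\<dots> = (\<integral>\<^sup>+y. \<integral>\<^sup>+\<omega>. ?q \<omega> y * indicator A y \<partial>M \<partial>PiM {..<?n} (\<lambda>_. lborel))"
      using AL qm by (intro MP.Fubini'[symmetric]) (simp add: split_beta')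
    also have "\<dots> = (\<integral>\<^sup>+y. ennreal (dens M f s xs y) * indicator A y \<partial>PiM {..<?n} (\<lambda>_. lborel))"
      using qm by (intro nn_integral_cong) (simp add: nn_integral_multc qdens[symmetric])
    also have "\<dots> = emeasure (density (PiM {..<?n} (\<lambda>_. lborel)) (\<lambda>y. ennreal (dens M f s xs y))) A"
      using AL densm by (simp add: emeasure_density)
    finally show "emeasure (Px M f s xs) A = emeasure (density (PiM {..<?n} (\<lambda>_. lborel)) (\<lambda>y. ennreal (dens M f s xs y))) A" .
  qed
qed

lemma dens_measurable:
  assumes np: "noisy_process M f s"
  shows "(\<lambda>y. dens M f s xs y) \<in> borel_measurable (PiM {..<length xs} (\<lambda>_. lborel))"
proof -
  interpret M: prob_space M using np by (simp add: noisy_process_def)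
  have fm[measurable]: "\<And>x. (\<lambda>\<omega>. f \<omega> x) \<in> borel_measurable M" using np by (simp add: noisy_process_def)
  show ?thesis unfolding dens_def normal_density_def by measurable
qed

lemma dens_nonneg: "0 \<le> dens M f s xs y"
  unfolding dens_def by (intro integral_nonneg_AE) (auto simp: prod_nonneg)

lemma dens_tendsto:
  assumes np: "noisy_process M f s"
    and len: "\<And>k. length (ys k) = length xs"
    and conv: "\<And>i. i < length xs \<Longrightarrow> (\<lambda>k. ys k ! i) \<longlonglongrightarrow> xs ! i"
  shows "(\<lambda>k. dens M f s (ys k) y) \<longlonglongrightarrow> dens M f s xs y"
proof -
  interpret M: prob_space M using np by (simp add: noisy_process_def)
  have fm[measurable]: "\<And>x. (\<lambda>\<omega>. f \<omega> x) \<in> borel_measurable M" using np by (simp add: noisy_process_def)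
  have fc: "\<And>\<omega>. \<omega> \<in> space M \<Longrightarrow> continuous_on UNIV (f \<omega>)" using np by (simp add: noisy_process_def)
  have s: "0 < s" using np by (simp add: noisy_process_def)
  let ?n = "length xs"
  let ?B = "(1 / sqrt (2 * pi * s\<^sup>2)) ^ ?n"
  show ?thesis
    unfolding dens_def len
  proof (rule integral_dominated_convergence[where w="\<lambda>_. ?B"])
    show "(\<lambda>\<omega>. \<Prod>i<?n. normal_density (f \<omega> (xs ! i)) s (y i)) \<in> borel_measurable M"
      unfolding normal_density_def by measurable
    show "(\<lambda>\<omega>. \<Prod>i<?n. normal_density (f \<omega> (ys k ! i)) s (y i)) \<in> borel_measurable M" for k
      unfolding normal_density_def by measurable
    show "integrable M (\<lambda>_. ?B)" by simp
    show "AE \<omega> in M. norm (\<Prod>i<?n. normal_density (f \<omega> (ys k ! i)) s (y i)) \<le> ?B" for k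
    proof (rule AE_I2)
      fix \<omega>
      have "0 \<le> (\<Prod>i<?n. normal_density (f \<omega> (ys k ! i)) s (y i))" by (intro prod_nonneg) simp
      then show "norm (\<Prod>i<?n. normal_density (f \<omega> (ys k ! i)) s (y i)) \<le> ?B"
        using prod_nd_le[where I="{..<?n}" and s=s and x=y and m="\<lambda>i. f \<omega> (ys k ! i)"] by simp
    qed
    show "AE \<omega> in M. (\<lambda>k. \<Prod>i<?n. normal_density (f \<omega> (ys k ! i)) s (y i)) \<longlonglongrightarrow> (\<Prod>i<?n. normal_density (f \<omega> (xs ! i)) s (y i))"
    proof (rule AE_I2)
      fix \<omega> assume w: "\<omega> \<in> space M"
      have "(\<lambda>k. normal_density (f \<omega> (ys k ! i)) s (y i)) \<longlonglongrightarrow> normal_density (f \<omega> (xs ! i)) s (y i)" if i: "i < ?n" for i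
      proof -
        have ic: "isCont (f \<omega>) (xs ! i)"
          using fc[OF w] by (simp add: continuous_on_eq_continuous_at)
        have lim1: "(\<lambda>k. f \<omega> (ys k ! i)) \<longlonglongrightarrow> f \<omega> (xs ! i)"
          by (rule isCont_tendsto_compose[OF ic conv[OF i]])
        have "(\<lambda>k. exp (- (y i - f \<omega> (ys k ! i))\<^sup>2 / (2 * s\<^sup>2))) \<longlonglongrightarrow> exp (- (y i - f \<omega> (xs ! i))\<^sup>2 / (2 * s\<^sup>2))"
          using s lim1 by (intro tendsto_intros) simp_all
        then show ?thesis unfolding normal_density_def by (intro tendsto_mult_left)
      qed
      then show "(\<lambda>k. \<Prod>i<?n. normal_density (f \<omega> (ys k ! i)) s (y i)) \<longlonglongrightarrow> (\<Prod>i<?n. normal_density (f \<omega> (xs ! i)) s (y i))"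
        by (intro tendsto_prod) simp
    qed
  qed
qed

lemma Px_eq_AE:
  assumes np: "noisy_process M f s" and nq: "noisy_process N g t"
  shows "Px M f s xs = Px N g t xs \<longleftrightarrow> (AE y in PiM {..<length xs} (\<lambda>_. lborel). dens M f s xs y = dens N g t xs y)"
proof -
  interpret LF: finite_product_sigma_finite "\<lambda>_::nat. lborel :: real measure" "{..<length xs}" by standard auto
  have "Px M f s xs = Px N g t xs \<longleftrightarrow> (AE y in PiM {..<length xs} (\<lambda>_. lborel). ennreal (dens M f s xs y) = ennreal (dens N g t xs y))"
    unfolding Px_density[OF np] Px_density[OF nq]
    using dens_measurable[OF np] dens_measurable[OF nq]
    by (intro LF.density_unique_iff) auto
  also have "\<dots> \<longleftrightarrow> (AE y in PiM {..<length xs} (\<lambda>_. lborel). dens M f s xs y = dens N g t xs y)"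
    by (simp add: dens_nonneg)
  finally show ?thesis .
qed

lemma closure_eq:
  assumes np: "noisy_process M f s" and nq: "noisy_process N g t"
    and D: "dense_in_Rn n J" and E: "\<And>ys. ys \<in> J \<Longrightarrow> length ys = n \<Longrightarrow> Px M f s ys = Px N g t ys"
    and len: "length xs = n"
  shows "Px M f s xs = Px N g t xs"
proof -
  have "\<forall>k::nat. \<exists>ys. ys \<in> J \<and> length ys = n \<and> (\<forall>i<n. \<bar>ys ! i - xs ! i\<bar> < 1 / (real k + 1))"
  proof
    fix k :: nat
    have e: "(0::real) < 1 / (real k + 1)" by simp
    from D len e show "\<exists>ys. ys \<in> J \<and> length ys = n \<and> (\<forall>i<n. \<bar>ys ! i - xs ! i\<bar> < 1 / (real k + 1))"
      unfolding dense_in_Rn_def by blast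
  qed
  from choice[OF this] obtain ys where ys0: "\<forall>k. ys k \<in> J \<and> length (ys k) = n \<and> (\<forall>i<n. \<bar>ys k ! i - xs ! i\<bar> < 1 / (real k + 1))"
    by blast
  then have ys: "\<And>k. ys k \<in> J" "\<And>k. length (ys k) = n"
      "\<And>k i. i < n \<Longrightarrow> \<bar>ys k ! i - xs ! i\<bar> < 1 / (real k + 1)"
    by auto
  have conv: "(\<lambda>k. ys k ! i) \<longlonglongrightarrow> xs ! i" if i: "i < length xs" for i
  proof -
    have lim: "(\<lambda>k. 1 / (real k + 1)) \<longlonglongrightarrow> 0"
      using LIMSEQ_inverse_real_of_nat by (simp add: inverse_eq_divide add.commute)
    have ev: "eventually (\<lambda>k. norm (ys k ! i - xs ! i) \<le> 1 / (real k + 1)) sequentially"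
      using ys(3)[of i] i len by (intro always_eventually allI) (simp add: less_imp_le)
    have "(\<lambda>k. ys k ! i - xs ! i) \<longlonglongrightarrow> 0"
      by (rule Lim_null_comparison[OF ev lim])
    then show ?thesis by (simp add: LIM_zero_cancel)
  qed
  have "\<forall>k. AE y in PiM {..<n} (\<lambda>_. lborel). dens M f s (ys k) y = dens N g t (ys k) y"
  proof
    fix k
    have "Px M f s (ys k) = Px N g t (ys k)" using E ys(1,2) by auto
    then show "AE y in PiM {..<n} (\<lambda>_. lborel). dens M f s (ys k) y = dens N g t (ys k) y"
      using Px_eq_AE[OF np nq, of "ys k"] unfolding ys(2)[of k] by simp
  qed
  then have "AE y in PiM {..<n} (\<lambda>_. lborel). \<forall>k. dens M f s (ys k) y = dens N g t (ys k) y"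
    by (simp add: AE_all_countable)
  then have "AE y in PiM {..<n} (\<lambda>_. lborel). dens M f s xs y = dens N g t xs y"
  proof (rule AE_mp, intro AE_I2 impI)
    fix y assume eqk: "\<forall>k. dens M f s (ys k) y = dens N g t (ys k) y"
    have "(\<lambda>k. dens M f s (ys k) y) \<longlonglongrightarrow> dens M f s xs y"
      using dens_tendsto[OF np] ys(2) len conv by auto
    then have l1: "(\<lambda>k. dens N g t (ys k) y) \<longlonglongrightarrow> dens M f s xs y"
      using eqk by simp
    have l2: "(\<lambda>k. dens N g t (ys k) y) \<longlonglongrightarrow> dens N g t xs y"
      using dens_tendsto[OF nq] ys(2) len conv by auto
    show "dens M f s xs y = dens N g t xs y" using LIMSEQ_unique[OF l1 l2] .
  qed
  then show ?thesis using Px_eq_AE[OF np nq, of xs] unfolding len by simp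
qed


lemma char_normal0:
  assumes s: "0 < s"
  shows "(\<integral>x. iexp (a * x) \<partial>density lborel (normal_density 0 s)) = complex_of_real (exp (- (s * a)\<^sup>2 / 2))"
proof -
  have "(\<integral>x. iexp (a * x) \<partial>density lborel (normal_density 0 s)) = (\<integral>x. normal_density 0 s x *\<^sub>R iexp (a * x) \<partial>lborel)"
    by (subst integral_density) auto
  also have "\<dots> = \<bar>s\<bar> *\<^sub>R (\<integral>z. normal_density 0 s (0 + s * z) *\<^sub>R iexp (a * (0 + s * z)) \<partial>lborel)"
    using s by (intro lborel_integral_real_affine) auto
  also have "\<dots> = (\<integral>z. std_normal_density z *\<^sub>R iexp ((s * a) * z) \<partial>lborel)"
  proof -
    have "\<And>z. normal_density 0 s (s * z) = std_normal_density z / s"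
      using s by (simp add: normal_density_def power_mult_distrib real_sqrt_mult field_simps)
    then show ?thesis using s by (simp add: scaleR_conv_of_real mult_ac)
  qed
  also have "\<dots> = char std_normal_distribution (s * a)"
    unfolding char_def by (subst integral_density) auto
  also have "\<dots> = complex_of_real (exp (- (s * a)\<^sup>2 / 2))"
    by (simp add: char_std_normal_distribution)
  finally show ?thesis .
qed


lemma prod_01:
  fixes h :: "nat \<Rightarrow> 'b::comm_monoid_mult"
  assumes "2 \<le> n" and "\<And>i. 2 \<le> i \<Longrightarrow> h i = 1"
  shows "(\<Prod>i<n. h i) = h 0 * h 1"
proof -
  have "{..<n} = insert 0 (insert 1 {2..<n})" using assms(1) by auto
  then have "(\<Prod>i<n. h i) = h 0 * (h 1 * (\<Prod>i\<in>{2..<n}. h i))" by simp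
  also have "(\<Prod>i\<in>{2..<n}. h i) = 1" using assms(2) by (intro prod.neutral) auto
  finally show ?thesis by simp
qed

lemma Px_char2:
  assumes np: "noisy_process M f s" and n2: "2 \<le> length xs"
  shows "(\<integral>y. iexp (a * y 0 + b * y 1) \<partial>Px M f s xs)
       = (\<integral>\<omega>. iexp (a * f \<omega> (xs!0) + b * f \<omega> (xs!1)) \<partial>M) * complex_of_real (exp (- (s * a)\<^sup>2 / 2) * exp (- (s * b)\<^sup>2 / 2))"
proof -
  let ?n = "length xs"
  interpret M: prob_space M using np by (simp add: noisy_process_def)
  have s: "0 < s" using np by (simp add: noisy_process_def)
  have fm[measurable]: "\<And>x. (\<lambda>\<omega>. f \<omega> x) \<in> borel_measurable M" using np by (simp add: noisy_process_def)
  let ?D = "\<lambda>_::nat. density lborel (normal_density 0 s)"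
  interpret P0: product_prob_space ?D
    using s by (intro product_prob_spaceI prob_space_normal_density)
  interpret Nz: prob_space "noise ?n s" unfolding noise_def using s by (intro prob_space_PiM prob_space_normal_density)
  interpret MN: pair_prob_space M "noise ?n s" by standard
  have i0: "0 \<in> {..<?n}" and i1: "1 \<in> {..<?n}" using n2 by auto
  let ?T = "PiM {..<?n} (\<lambda>_. borel) :: (nat \<Rightarrow> real) measure"
  let ?Phi = "\<lambda>(\<omega>, e). \<lambda>i\<in>{..<?n}. f \<omega> (xs ! i) + (e::nat\<Rightarrow>real) i"
  have Phim: "?Phi \<in> measurable (M \<Otimes>\<^sub>M noise ?n s) ?T"
    unfolding noise_def by (simp add: split_beta') measurable
  have hm: "(\<lambda>y. iexp (a * y 0 + b * y 1)) \<in> borel_measurable ?T"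
    using i0 i1 by measurable
  let ?G = "\<lambda>p. iexp (a * (f (fst p) (xs!0) + snd p 0) + b * (f (fst p) (xs!1) + snd p 1))"
  have Gm: "?G \<in> borel_measurable (M \<Otimes>\<^sub>M noise ?n s)"
    unfolding noise_def using i0 i1 by measurable
  have Gint: "integrable (M \<Otimes>\<^sub>M noise ?n s) ?G"
    by (rule MN.P.integrable_const_bound[where B=1]; (fact Gm | simp add: norm_exp_i_times))
  have "(\<integral>y. iexp (a * y 0 + b * y 1) \<partial>Px M f s xs) = (\<integral>p. iexp (a * ?Phi p 0 + b * ?Phi p 1) \<partial>(M \<Otimes>\<^sub>M noise ?n s))"
    unfolding Px_def by (rule integral_distr[OF Phim hm])
  also have "\<dots> = (\<integral>p. ?G p \<partial>(M \<Otimes>\<^sub>M noise ?n s))"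
    using i0 i1 by (intro Bochner_Integration.integral_cong) (auto simp: split_beta')
  also have "\<dots> = (\<integral>\<omega>. \<integral>e. ?G (\<omega>, e) \<partial>noise ?n s \<partial>M)"
    by (rule MN.integral_fst'[OF Gint, symmetric])
  also have "\<dots> = (\<integral>\<omega>. iexp (a * f \<omega> (xs!0) + b * f \<omega> (xs!1)) * complex_of_real (exp (- (s * a)\<^sup>2 / 2) * exp (- (s * b)\<^sup>2 / 2)) \<partial>M)"
  proof (rule Bochner_Integration.integral_cong[OF refl])
    fix \<omega> assume "\<omega> \<in> space M"
    let ?g = "\<lambda>(i::nat) (x::real). if i = 0 then iexp (a * x) else if i = 1 then iexp (b * x) else 1"
    have split: "?G (\<omega>, e) = iexp (a * f \<omega> (xs!0) + b * f \<omega> (xs!1)) * (\<Prod>i<?n. ?g i (e i))" for e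
    proof -
      have "(\<Prod>i<?n. ?g i (e i)) = ?g 0 (e 0) * ?g 1 (e 1)" using prod_01[of ?n "\<lambda>i. ?g i (e i)"] n2 by auto
      then show ?thesis by (simp add: exp_add[symmetric] algebra_simps)
    qed
    have h1: "measure (?D i) UNIV = 1" for i
      using prob_space.prob_space[OF prob_space_normal_density[OF s]] by simp
    have gint: "integrable (?D i) (?g i)" for i
      by (rule P0.M.integrable_const_bound[where B=1]) (auto simp: norm_exp_i_times)
    have "(\<integral>e. (\<Prod>i<?n. ?g i (e i)) \<partial>noise ?n s) = (\<Prod>i<?n. \<integral>x. ?g i x \<partial>?D i)"
      unfolding noise_def by (rule P0.product_integral_prod) (auto intro: gint)
    also have "\<dots> = (\<integral>x. ?g 0 x \<partial>?D 0) * (\<integral>x. ?g 1 x \<partial>?D 1)"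
      using prod_01[of ?n "\<lambda>i. \<integral>x. ?g i x \<partial>?D i"] n2 h1 by simp
    also have "\<dots> = complex_of_real (exp (- (s * a)\<^sup>2 / 2) * exp (- (s * b)\<^sup>2 / 2))"
      using char_normal0[OF s, of a] char_normal0[OF s, of b] by simp
    finally show "(\<integral>e. ?G (\<omega>, e) \<partial>noise ?n s) = iexp (a * f \<omega> (xs!0) + b * f \<omega> (xs!1)) * complex_of_real (exp (- (s * a)\<^sup>2 / 2) * exp (- (s * b)\<^sup>2 / 2))"
      unfolding split by simp
  qed
  also have "\<dots> = (\<integral>\<omega>. iexp (a * f \<omega> (xs!0) + b * f \<omega> (xs!1)) \<partial>M) * complex_of_real (exp (- (s * a)\<^sup>2 / 2) * exp (- (s * b)\<^sup>2 / 2))"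
    by simp
  finally show ?thesis .
qed


lemma pair_laws:
  assumes np: "noisy_process M f s" and nq: "noisy_process N g t" and n2: "2 \<le> n"
    and eq: "\<And>xs. length xs = n \<Longrightarrow> Px M f s xs = Px N g t xs"
  shows "s = t" "distr M borel (\<lambda>\<omega>. a * f \<omega> x + b * f \<omega> y) = distr N borel (\<lambda>\<omega>. a * g \<omega> x + b * g \<omega> y)"
proof -
  interpret M: prob_space M using np by (simp add: noisy_process_def)
  interpret N: prob_space N using nq by (simp add: noisy_process_def)
  have s: "0 < s" using np by (simp add: noisy_process_def)
  have t: "0 < t" using nq by (simp add: noisy_process_def)
  have fm[measurable]: "\<And>x. (\<lambda>\<omega>. f \<omega> x) \<in> borel_measurable M" using np by (simp add: noisy_process_def)
  have gm[measurable]: "\<And>x. (\<lambda>\<omega>. g \<omega> x) \<in> borel_measurable N" using nq by (simp add: noisy_process_def)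
  define K where "K = (\<lambda>s a b. complex_of_real (exp (- (s * a)\<^sup>2 / 2) * exp (- (s * b)\<^sup>2 / 2)))"
  have key: "(\<integral>\<omega>. iexp (a * f \<omega> x + b * f \<omega> y) \<partial>M) * K s a b = (\<integral>\<omega>. iexp (a * g \<omega> x + b * g \<omega> y) \<partial>N) * K t a b" for a b x y
  proof -
    define xs where "xs = x # y # replicate (n - 2) x"
    have len: "length xs = n" "2 \<le> length xs" using n2 by (auto simp: xs_def)
    have "(\<integral>z. iexp (a * z 0 + b * z 1) \<partial>Px M f s xs) = (\<integral>z. iexp (a * z 0 + b * z 1) \<partial>Px N g t xs)"
      using eq[OF len(1)] by simp
    then show ?thesis
      unfolding Px_char2[OF np len(2)] Px_char2[OF nq len(2)] K_def by (simp add: xs_def)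
  qed
  have "K s 1 (-1) = K t 1 (-1)"
    using key[of 1 x "-1" x] by (simp add: M.prob_space N.prob_space)
  then have "exp (- s\<^sup>2 / 2) * exp (- s\<^sup>2 / 2) = exp (- t\<^sup>2 / 2) * exp (- t\<^sup>2 / 2)"
    unfolding K_def of_real_eq_iff by simp
  then have "exp (- s\<^sup>2) = exp (- t\<^sup>2)" by (simp add: exp_add[symmetric])
  then have "s\<^sup>2 = t\<^sup>2" by simp
  then show st: "s = t" using s t by (simp add: power2_eq_iff_nonneg)
  have Knz: "K t a b \<noteq> 0" for a b unfolding K_def by simp
  have key2: "(\<integral>\<omega>. iexp (a * f \<omega> x + b * f \<omega> y) \<partial>M) = (\<integral>\<omega>. iexp (a * g \<omega> x + b * g \<omega> y) \<partial>N)" for a b x y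
    using key[of a x b y] Knz[of a b] st by simp
  show "distr M borel (\<lambda>\<omega>. a * f \<omega> x + b * f \<omega> y) = distr N borel (\<lambda>\<omega>. a * g \<omega> x + b * g \<omega> y)"
  proof (rule Levy_uniqueness)
    show "real_distribution (distr M borel (\<lambda>\<omega>. a * f \<omega> x + b * f \<omega> y))" by (intro M.real_distribution_distr) measurable
    show "real_distribution (distr N borel (\<lambda>\<omega>. a * g \<omega> x + b * g \<omega> y))" by (intro N.real_distribution_distr) measurable
    show "char (distr M borel (\<lambda>\<omega>. a * f \<omega> x + b * f \<omega> y)) = char (distr N borel (\<lambda>\<omega>. a * g \<omega> x + b * g \<omega> y))"
    proof
      fix u
      have "char (distr M borel (\<lambda>\<omega>. a * f \<omega> x + b * f \<omega> y)) u = (\<integral>\<omega>. iexp ((u * a) * f \<omega> x + (u * b) * f \<omega> y) \<partial>M)"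
        unfolding char_def by (subst integral_distr) (auto simp: algebra_simps)
      also have "\<dots> = (\<integral>\<omega>. iexp ((u * a) * g \<omega> x + (u * b) * g \<omega> y) \<partial>N)" by (rule key2)
      also have "\<dots> = char (distr N borel (\<lambda>\<omega>. a * g \<omega> x + b * g \<omega> y)) u"
        unfolding char_def by (subst integral_distr) (auto simp: algebra_simps)
      finally show "char (distr M borel (\<lambda>\<omega>. a * f \<omega> x + b * f \<omega> y)) u = char (distr N borel (\<lambda>\<omega>. a * g \<omega> x + b * g \<omega> y)) u" .
    qed
  qed
qed


definition isgauss :: "real measure \<Rightarrow> bool" where
  "isgauss L \<longleftrightarrow> (\<exists>m \<sigma>. \<sigma> > 0 \<and> L = density lborel (normal_density m \<sigma>)) \<or> (\<exists>c. L = return borel c)"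

lemma gauss_law:
  assumes "prob_space M" and G: "real_gaussian M X"
  shows "X \<in> borel_measurable M" "isgauss (distr M borel X)"
proof -
  interpret prob_space M by fact
  have "X \<in> borel_measurable M \<and> isgauss (distr M borel X)"
  proof (cases "\<exists>m s. s > 0 \<and> distributed M lborel X (normal_density m s)")
    case True
    then obtain m s where s: "s > 0" and D: "distributed M lborel X (normal_density m s)" by blast
    have Xm: "X \<in> measurable M lborel" using D by (simp add: distributed_def)
    then have Xb: "X \<in> borel_measurable M" by (simp cong: measurable_cong_sets)
    have "distr M borel X = distr M lborel X" by (rule distr_cong) auto
    also have "\<dots> = density lborel (normal_density m s)" using D by (simp add: distributed_def)
    finally show ?thesis using s Xb unfolding isgauss_def by blast
  next
    case False
    then have Xb: "X \<in> borel_measurable M" and c: "\<exists>c. AE \<omega> in M. X \<omega> = c"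
      using G by (auto simp: real_gaussian_def)
    then obtain c where c: "AE \<omega> in M. X \<omega> = c" by blast
    have "distr M borel X = distr M borel (\<lambda>_. c)"
      using c Xb by (intro distr_cong_AE) auto
    also have "\<dots> = return borel c" by simp
    finally show ?thesis using Xb unfolding isgauss_def by blast
  qed
  then show "X \<in> borel_measurable M" "isgauss (distr M borel X)" by auto
qed

lemma normal_moments:
  assumes s: "0 < s"
  shows "integrable (density lborel (normal_density m s)) (\<lambda>x. x)"
    "integrable (density lborel (normal_density m s)) (\<lambda>x. x\<^sup>2)"
    "(\<integral>x. x \<partial>density lborel (normal_density m s)) = m"
    "(\<integral>x. x\<^sup>2 \<partial>density lborel (normal_density m s)) = s\<^sup>2 + m\<^sup>2"
proof -
  have i1: "integrable lborel (\<lambda>x. normal_density m s x * x)" by (rule integrable_normal_moment_nz_1[OF s])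
  have i2: "integrable lborel (\<lambda>x. normal_density m s x * (x - m)^2)" by (rule integrable_normal_moment[OF s])
  have i0: "integrable lborel (\<lambda>x. normal_density m s x)" using integrable_normal_density[OF s] by simp
  have eq2: "(\<lambda>x. normal_density m s x * x\<^sup>2) = (\<lambda>x. normal_density m s x * (x - m)^2 + 2 * m * (normal_density m s x * x) - m\<^sup>2 * normal_density m s x)"
    by (auto simp: fun_eq_iff power2_eq_square algebra_simps)
  have i2': "integrable lborel (\<lambda>x. normal_density m s x * x\<^sup>2)"
    unfolding eq2 using i0 i1 i2 by (intro Bochner_Integration.integrable_diff Bochner_Integration.integrable_add integrable_mult_right) auto
  show "integrable (density lborel (normal_density m s)) (\<lambda>x. x)"
    using i1 by (subst integrable_density) auto
  show "integrable (density lborel (normal_density m s)) (\<lambda>x. x\<^sup>2)"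
    using i2' by (subst integrable_density) auto
  show "(\<integral>x. x \<partial>density lborel (normal_density m s)) = m"
    using integral_normal_moment_nz_1[OF s] by (subst integral_density) auto
  have "(\<integral>x. normal_density m s x * (x - m)^(2*1) \<partial>lborel) = s\<^sup>2"
    using integral_normal_moment_even[OF s, of m 1] by (simp add: power2_eq_square)
  then have "(\<integral>x. normal_density m s x * x\<^sup>2 \<partial>lborel) = s\<^sup>2 + 2 * m * m - m\<^sup>2"
    unfolding eq2 using i0 i1 i2 integral_normal_moment_nz_1[OF s] integral_normal_density[OF s]
    by (subst Bochner_Integration.integral_diff Bochner_Integration.integral_add integral_mult_right, (auto intro: integrable_mult_right)[2])+ simp
  then show "(\<integral>x. x\<^sup>2 \<partial>density lborel (normal_density m s)) = s\<^sup>2 + m\<^sup>2"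
    by (subst integral_density) (auto simp: power2_eq_square)
qed

lemma gauss_moments:
  assumes "isgauss L"
  shows "integrable L (\<lambda>x. x)" "integrable L (\<lambda>x. x\<^sup>2)"
proof -
  have r: "integrable (return borel c) h" if "h \<in> borel_measurable borel" for c and h :: "real \<Rightarrow> real"
    using that by (simp add: integrable_iff_bounded nn_integral_return)
  show "integrable L (\<lambda>x. x)" using assms normal_moments(1) r[of "\<lambda>x. x"] unfolding isgauss_def by auto
  show "integrable L (\<lambda>x. x\<^sup>2)" using assms normal_moments(2) r[of "\<lambda>x. x\<^sup>2"] unfolding isgauss_def by auto
qed

lemma gauss_eq:
  assumes G1: "isgauss L1" and G2: "isgauss L2"
    and e1: "(\<integral>x. x \<partial>L1) = (\<integral>x. x \<partial>L2)" and e2: "(\<integral>x. x\<^sup>2 \<partial>L1) = (\<integral>x. x\<^sup>2 \<partial>L2)"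
  shows "L1 = L2"
proof -
  have r1: "(\<integral>x. x \<partial>return borel c) = c" for c :: real
    by (rule integral_return) auto
  have r2: "(\<integral>x. x\<^sup>2 \<partial>return borel c) = c\<^sup>2" for c :: real
    by (rule integral_return) auto
  have nm: "L = density lborel (normal_density m s) \<Longrightarrow> s > 0 \<Longrightarrow> (\<integral>x. x \<partial>L) = m \<and> (\<integral>x. x\<^sup>2 \<partial>L) = s\<^sup>2 + m\<^sup>2" for L :: "real measure" and m s :: real
    using normal_moments(3,4) by simp
  have rm: "L = return borel c \<Longrightarrow> (\<integral>x. x \<partial>L) = c \<and> (\<integral>x. x\<^sup>2 \<partial>L) = c\<^sup>2" for L :: "real measure" and c :: real
    using r1 r2 by simp
  show ?thesis
  proof (cases "\<exists>m \<sigma>. \<sigma> > 0 \<and> L1 = density lborel (normal_density m \<sigma>)")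
    case True
    then obtain m s where s: "s > 0" and L1: "L1 = density lborel (normal_density m s)" by blast
    have a1: "(\<integral>x. x \<partial>L1) = m" and b1: "(\<integral>x. x\<^sup>2 \<partial>L1) = s\<^sup>2 + m\<^sup>2" using nm[OF L1 s] by auto
    show ?thesis
    proof (cases "\<exists>m \<sigma>. \<sigma> > 0 \<and> L2 = density lborel (normal_density m \<sigma>)")
      case True
      then obtain m' s' where s': "s' > 0" and L2: "L2 = density lborel (normal_density m' s')" by blast
      have a2: "(\<integral>x. x \<partial>L2) = m'" and b2: "(\<integral>x. x\<^sup>2 \<partial>L2) = s'\<^sup>2 + m'\<^sup>2" using nm[OF L2 s'] by auto
      have mm: "m = m'" using e1 a1 a2 by linarith
      then have "s\<^sup>2 = s'\<^sup>2" using e2 b1 b2 by simp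
      then have "s = s'" using s s' by (simp add: power2_eq_iff_nonneg)
      then show ?thesis using L1 L2 mm by simp
    next
      case False
      then obtain c where L2: "L2 = return borel c" using G2 unfolding isgauss_def by blast
      have a2: "(\<integral>x. x \<partial>L2) = c" and b2: "(\<integral>x. x\<^sup>2 \<partial>L2) = c\<^sup>2" using rm[OF L2] by auto
      have "m = c" using e1 a1 a2 by linarith
      moreover have "s\<^sup>2 + m\<^sup>2 = c\<^sup>2" using e2 b1 b2 by linarith
      ultimately have "s\<^sup>2 = 0" by simp
      then show ?thesis using s by simp
    qed
  next
    case False
    then obtain c where L1: "L1 = return borel c" using G1 unfolding isgauss_def by blast
    have a1: "(\<integral>x. x \<partial>L1) = c" and b1: "(\<integral>x. x\<^sup>2 \<partial>L1) = c\<^sup>2" using rm[OF L1] by auto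
    show ?thesis
    proof (cases "\<exists>m \<sigma>. \<sigma> > 0 \<and> L2 = density lborel (normal_density m \<sigma>)")
      case True
      then obtain m s where s: "s > 0" and L2: "L2 = density lborel (normal_density m s)" by blast
      have a2: "(\<integral>x. x \<partial>L2) = m" and b2: "(\<integral>x. x\<^sup>2 \<partial>L2) = s\<^sup>2 + m\<^sup>2" using nm[OF L2 s] by auto
      have "m = c" using e1 a1 a2 by linarith
      moreover have "s\<^sup>2 + m\<^sup>2 = c\<^sup>2" using e2 b1 b2 by linarith
      ultimately have "s\<^sup>2 = 0" by simp
      then show ?thesis using s by simp
    next
      case False
      then obtain c' where L2: "L2 = return borel c'" using G2 unfolding isgauss_def by blast
      have "(\<integral>x. x \<partial>L2) = c'" using rm[OF L2] by auto
      then have "c = c'" using e1 a1 by linarith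
      then show ?thesis using L1 L2 by simp
    qed
  qed
qed

lemma gp_comb:
  assumes "gaussian_process M f"
  shows "real_gaussian M (\<lambda>\<omega>. a * f \<omega> x + b * f \<omega> y)"
proof -
  have "real_gaussian M (\<lambda>\<omega>. \<Sum>i<length [x, y]. [a, b] ! i * f \<omega> ([x, y] ! i))"
    using assms unfolding gaussian_process_def by (metis length_Cons)
  moreover have "(\<lambda>\<omega>. \<Sum>i<length [x, y]. [a, b] ! i * f \<omega> ([x, y] ! i)) = (\<lambda>\<omega>. a * f \<omega> x + b * f \<omega> y)"
    by (auto simp: numeral_2_eq_2 lessThan_Suc fun_eq_iff algebra_simps)
  ultimately show ?thesis by simp
qed

lemma gauss_rv_moments:
  assumes "prob_space M" "real_gaussian M X"
  shows "integrable M X" "integrable M (\<lambda>\<omega>. (X \<omega>)\<^sup>2)"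
    "(\<integral>\<omega>. X \<omega> \<partial>M) = (\<integral>u. u \<partial>distr M borel X)"
    "(\<integral>\<omega>. (X \<omega>)\<^sup>2 \<partial>M) = (\<integral>u. u\<^sup>2 \<partial>distr M borel X)"
proof -
  have Xm[measurable]: "X \<in> borel_measurable M" and G: "isgauss (distr M borel X)"
    using gauss_law[OF assms] by auto
  show "integrable M X" using gauss_moments(1)[OF G] by (subst (asm) integrable_distr_eq) auto
  show "integrable M (\<lambda>\<omega>. (X \<omega>)\<^sup>2)" using gauss_moments(2)[OF G] by (subst (asm) integrable_distr_eq) auto
  show "(\<integral>\<omega>. X \<omega> \<partial>M) = (\<integral>u. u \<partial>distr M borel X)" by (subst integral_distr) auto
  show "(\<integral>\<omega>. (X \<omega>)\<^sup>2 \<partial>M) = (\<integral>u. u\<^sup>2 \<partial>distr M borel X)" by (subst integral_distr) auto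
qed

lemma gp_integrable:
  assumes P: "prob_space M" and G: "gaussian_process M f"
  shows "integrable M (\<lambda>\<omega>. f \<omega> x)" "integrable M (\<lambda>\<omega>. f \<omega> x * f \<omega> y)"
proof -
  note R = gauss_rv_moments[OF P gp_comb[OF G]]
  show "integrable M (\<lambda>\<omega>. f \<omega> x)" using R(1)[of 1 x 0 x] by simp
  have i1: "integrable M (\<lambda>\<omega>. (f \<omega> x + f \<omega> y)\<^sup>2)" using R(2)[of 1 x 1 y] by simp
  have i2: "integrable M (\<lambda>\<omega>. (f \<omega> x)\<^sup>2)" using R(2)[of 1 x 0 x] by simp
  have i3: "integrable M (\<lambda>\<omega>. (f \<omega> y)\<^sup>2)" using R(2)[of 1 y 0 y] by simp
  have "integrable M (\<lambda>\<omega>. ((f \<omega> x + f \<omega> y)\<^sup>2 - (f \<omega> x)\<^sup>2 - (f \<omega> y)\<^sup>2) / 2)"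
    using i1 i2 i3 by auto
  moreover have "(\<lambda>\<omega>. ((f \<omega> x + f \<omega> y)\<^sup>2 - (f \<omega> x)\<^sup>2 - (f \<omega> y)\<^sup>2) / 2) = (\<lambda>\<omega>. f \<omega> x * f \<omega> y)"
    by (auto simp: fun_eq_iff power2_eq_square algebra_simps)
  ultimately show "integrable M (\<lambda>\<omega>. f \<omega> x * f \<omega> y)" by simp
qed

lemma gp_moment_eq:
  assumes P: "prob_space M" and GM: "gaussian_process M f"
    and Q: "prob_space N" and GN: "gaussian_process N g"
    and L: "\<And>a b x y. distr M borel (\<lambda>\<omega>. a * f \<omega> x + b * f \<omega> y) = distr N borel (\<lambda>\<omega>. a * g \<omega> x + b * g \<omega> y)"
  shows "(\<integral>\<omega>. f \<omega> x \<partial>M) = (\<integral>\<omega>. g \<omega> x \<partial>N)"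
    "(\<integral>\<omega>. f \<omega> x * f \<omega> y \<partial>M) = (\<integral>\<omega>. g \<omega> x * g \<omega> y \<partial>N)"
proof -
  note RM = gauss_rv_moments[OF P gp_comb[OF GM]]
  note RN = gauss_rv_moments[OF Q gp_comb[OF GN]]
  have E1: "(\<integral>\<omega>. a * f \<omega> x + b * f \<omega> y \<partial>M) = (\<integral>\<omega>. a * g \<omega> x + b * g \<omega> y \<partial>N)" for a b x y
    using RM(3)[of a x b y] RN(3)[of a x b y] L[of a x b y] by simp
  have E2: "(\<integral>\<omega>. (a * f \<omega> x + b * f \<omega> y)\<^sup>2 \<partial>M) = (\<integral>\<omega>. (a * g \<omega> x + b * g \<omega> y)\<^sup>2 \<partial>N)" for a b x y
    using RM(4)[of a x b y] RN(4)[of a x b y] L[of a x b y] by simp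
  show "(\<integral>\<omega>. f \<omega> x \<partial>M) = (\<integral>\<omega>. g \<omega> x \<partial>N)" using E1[of 1 x 0 x] by simp
  have dec: "(\<lambda>\<omega>. h \<omega> x * h \<omega> y) = (\<lambda>\<omega>. ((1 * h \<omega> x + 1 * h \<omega> y)\<^sup>2 - (1 * h \<omega> x + 0 * h \<omega> x)\<^sup>2 - (1 * h \<omega> y + 0 * h \<omega> y)\<^sup>2) / 2)" for h :: "_ \<Rightarrow> real \<Rightarrow> real"
    by (auto simp: fun_eq_iff power2_eq_square algebra_simps)
  have "(\<integral>\<omega>. f \<omega> x * f \<omega> y \<partial>M) = ((\<integral>\<omega>. (1 * f \<omega> x + 1 * f \<omega> y)\<^sup>2 \<partial>M) - (\<integral>\<omega>. (1 * f \<omega> x + 0 * f \<omega> x)\<^sup>2 \<partial>M) - (\<integral>\<omega>. (1 * f \<omega> y + 0 * f \<omega> y)\<^sup>2 \<partial>M)) / 2"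
    unfolding dec[of f] using RM(2)[of 1 x 1 y] RM(2)[of 1 x 0 x] RM(2)[of 1 y 0 y]
    by (simp del: mult_1 add_0_right mult_zero_left)
  also have "\<dots> = ((\<integral>\<omega>. (1 * g \<omega> x + 1 * g \<omega> y)\<^sup>2 \<partial>N) - (\<integral>\<omega>. (1 * g \<omega> x + 0 * g \<omega> x)\<^sup>2 \<partial>N) - (\<integral>\<omega>. (1 * g \<omega> y + 0 * g \<omega> y)\<^sup>2 \<partial>N)) / 2"
    by (simp only: E2)
  also have "\<dots> = (\<integral>\<omega>. g \<omega> x * g \<omega> y \<partial>N)"
    unfolding dec[of g] using RN(2)[of 1 x 1 y] RN(2)[of 1 x 0 x] RN(2)[of 1 y 0 y]
    by (simp del: mult_1 add_0_right mult_zero_left)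
  finally show "(\<integral>\<omega>. f \<omega> x * f \<omega> y \<partial>M) = (\<integral>\<omega>. g \<omega> x * g \<omega> y \<partial>N)" .
qed

lemma gp_lin_gauss:
  assumes "gaussian_process M f"
  shows "real_gaussian M (\<lambda>\<omega>. \<Sum>i<length xs. z i * f \<omega> (xs ! i))"
proof -
  have "real_gaussian M (\<lambda>\<omega>. \<Sum>i<length xs. map z [0..<length xs] ! i * f \<omega> (xs ! i))"
  proof -
    have "length (map z [0..<length xs]) = length xs" by simp
    then show ?thesis using assms unfolding gaussian_process_def by blast
  qed
  moreover have "(\<lambda>\<omega>. \<Sum>i<length xs. map z [0..<length xs] ! i * f \<omega> (xs ! i)) = (\<lambda>\<omega>. \<Sum>i<length xs. z i * f \<omega> (xs ! i))"
    by (auto simp: fun_eq_iff intro!: sum.cong)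
  ultimately show ?thesis by simp
qed

lemma comb_laws:
  assumes P: "prob_space M" and GM: "gaussian_process M f"
    and Q: "prob_space N" and GN: "gaussian_process N g"
    and L: "\<And>a b x y. distr M borel (\<lambda>\<omega>. a * f \<omega> x + b * f \<omega> y) = distr N borel (\<lambda>\<omega>. a * g \<omega> x + b * g \<omega> y)"
  shows "distr M borel (\<lambda>\<omega>. \<Sum>i<length xs. z i * f \<omega> (xs ! i)) = distr N borel (\<lambda>\<omega>. \<Sum>i<length xs. z i * g \<omega> (xs ! i))"
proof -
  let ?m = "length xs"
  note RM = gauss_rv_moments[OF P gp_lin_gauss[OF GM, where xs=xs and z=z]]
  note RN = gauss_rv_moments[OF Q gp_lin_gauss[OF GN, where xs=xs and z=z]]
  note ME = gp_moment_eq[OF P GM Q GN L]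
  have sq: "(\<Sum>i<?m. z i * h \<omega> (xs ! i))\<^sup>2 = (\<Sum>i<?m. \<Sum>j<?m. z i * z j * (h \<omega> (xs ! i) * h \<omega> (xs ! j)))"
    for h :: "'c \<Rightarrow> real \<Rightarrow> real" and \<omega>
    by (simp add: power2_eq_square sum_product algebra_simps)
  show ?thesis
  proof (rule gauss_eq)
    show "isgauss (distr M borel (\<lambda>\<omega>. \<Sum>i<?m. z i * f \<omega> (xs ! i)))"
      using gauss_law[OF P gp_lin_gauss[OF GM]] by auto
    show "isgauss (distr N borel (\<lambda>\<omega>. \<Sum>i<?m. z i * g \<omega> (xs ! i)))"
      using gauss_law[OF Q gp_lin_gauss[OF GN]] by auto
    have "(\<integral>\<omega>. (\<Sum>i<?m. z i * f \<omega> (xs ! i)) \<partial>M) = (\<Sum>i<?m. z i * (\<integral>\<omega>. f \<omega> (xs ! i) \<partial>M))"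
      using gp_integrable(1)[OF P GM] by (subst Bochner_Integration.integral_sum) auto
    also have "\<dots> = (\<Sum>i<?m. z i * (\<integral>\<omega>. g \<omega> (xs ! i) \<partial>N))" using ME(1) by simp
    also have "\<dots> = (\<integral>\<omega>. (\<Sum>i<?m. z i * g \<omega> (xs ! i)) \<partial>N)"
      using gp_integrable(1)[OF Q GN] by (subst Bochner_Integration.integral_sum) auto
    finally show "(\<integral>u. u \<partial>distr M borel (\<lambda>\<omega>. \<Sum>i<?m. z i * f \<omega> (xs ! i))) = (\<integral>u. u \<partial>distr N borel (\<lambda>\<omega>. \<Sum>i<?m. z i * g \<omega> (xs ! i)))"
      using RM(3) RN(3) by simp
    have "(\<integral>\<omega>. (\<Sum>i<?m. z i * f \<omega> (xs ! i))\<^sup>2 \<partial>M) = (\<Sum>i<?m. \<Sum>j<?m. z i * z j * (\<integral>\<omega>. f \<omega> (xs ! i) * f \<omega> (xs ! j) \<partial>M))"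
      unfolding sq using gp_integrable(2)[OF P GM]
      by (simp add: Bochner_Integration.integral_sum Bochner_Integration.integrable_sum)
    also have "\<dots> = (\<Sum>i<?m. \<Sum>j<?m. z i * z j * (\<integral>\<omega>. g \<omega> (xs ! i) * g \<omega> (xs ! j) \<partial>N))" using ME(2) by simp
    also have "\<dots> = (\<integral>\<omega>. (\<Sum>i<?m. z i * g \<omega> (xs ! i))\<^sup>2 \<partial>N)"
      unfolding sq using gp_integrable(2)[OF Q GN]
      by (simp add: Bochner_Integration.integral_sum Bochner_Integration.integrable_sum)
    finally show "(\<integral>u. u\<^sup>2 \<partial>distr M borel (\<lambda>\<omega>. \<Sum>i<?m. z i * f \<omega> (xs ! i))) = (\<integral>u. u\<^sup>2 \<partial>distr N borel (\<lambda>\<omega>. \<Sum>i<?m. z i * g \<omega> (xs ! i)))"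
      using RM(4) RN(4) by simp
  qed
qed


lemma nd_char:
  assumes s: "0 < s"
  shows "complex_of_real (normal_density m s v) = complex_of_real (1 / sqrt (2 * pi * s\<^sup>2)) * char std_normal_distribution ((v - m) / s)"
proof -
  have e: "(v - m)\<^sup>2 / (2 * s\<^sup>2) = ((v - m) / s)\<^sup>2 / 2" using s by (simp add: power_divide)
  have "char std_normal_distribution ((v - m) / s) = complex_of_real (exp (- (((v - m) / s)\<^sup>2) / 2))"
    by (simp add: char_std_normal_distribution)
  then show ?thesis unfolding normal_density_def[of m s v] using e by simp
qed

lemma dens_eq_from_laws:
  assumes np: "noisy_process M f s" and nq: "noisy_process N g s"
    and LAW: "\<And>w. distr M borel (\<lambda>\<omega>. \<Sum>i<length xs. w i * f \<omega> (xs ! i)) = distr N borel (\<lambda>\<omega>. \<Sum>i<length xs. w i * g \<omega> (xs ! i))"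
  shows "dens M f s xs y = dens N g s xs y"
proof -
  let ?m = "length xs"
  have s: "0 < s" using np by (simp add: noisy_process_def)
  define C where "C = complex_of_real ((1 / sqrt (2 * pi * s\<^sup>2)) ^ ?m)"
  let ?Z = "PiM {..<?m} (\<lambda>_. std_normal_distribution)"
  interpret Z: product_prob_space "\<lambda>_::nat. std_normal_distribution"
    by (intro product_prob_spaceI prob_space_normal_density) simp
  interpret ZP: prob_space ?Z by (intro prob_space_PiM prob_space_normal_density) simp
  have gen: "complex_of_real (dens K h s xs y) = C * (\<integral>z. (\<integral>u. iexp ((\<Sum>i<?m. y i * z i / s) - u) \<partial>distr K borel (\<lambda>\<omega>. \<Sum>i<?m. (z i / s) * h \<omega> (xs ! i))) \<partial>?Z)"
    if nk: "noisy_process K h s" for K :: "'c measure" and h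
  proof -
    interpret K: prob_space K using nk by (simp add: noisy_process_def)
    have hm[measurable]: "\<And>x. (\<lambda>\<omega>. h \<omega> x) \<in> borel_measurable K" using nk by (simp add: noisy_process_def)
    interpret KZ: pair_prob_space K ?Z by standard
    let ?H = "\<lambda>\<omega> z. iexp (\<Sum>i<?m. ((y i - h \<omega> (xs ! i)) / s) * z i)"
    have Hm: "(\<lambda>(\<omega>, z). ?H \<omega> z) \<in> borel_measurable (K \<Otimes>\<^sub>M ?Z)" by measurable
    have Hint: "integrable (K \<Otimes>\<^sub>M ?Z) (\<lambda>(\<omega>, z). ?H \<omega> z)"
      by (rule KZ.P.integrable_const_bound[where B=1]; (fact Hm | simp add: split_beta' norm_exp_i_times))
    have pt: "complex_of_real (\<Prod>i<?m. normal_density (h \<omega> (xs ! i)) s (y i)) = C * (\<integral>z. ?H \<omega> z \<partial>?Z)" for \<omega>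
    proof -
      have "complex_of_real (\<Prod>i<?m. normal_density (h \<omega> (xs ! i)) s (y i))
          = (\<Prod>i<?m. complex_of_real (1 / sqrt (2 * pi * s\<^sup>2)) * char std_normal_distribution ((y i - h \<omega> (xs ! i)) / s))"
        by (simp add: nd_char[OF s])
      also have "\<dots> = C * (\<Prod>i<?m. char std_normal_distribution ((y i - h \<omega> (xs ! i)) / s))"
        unfolding prod.distrib prod_constant C_def card_lessThan of_real_power ..
      also have "(\<Prod>i<?m. char std_normal_distribution ((y i - h \<omega> (xs ! i)) / s))
          = (\<integral>z. (\<Prod>i<?m. iexp (((y i - h \<omega> (xs ! i)) / s) * z i)) \<partial>?Z)"
        unfolding char_def
        by (rule Z.product_integral_prod[symmetric]) (auto intro!: Z.M.integrable_const_bound[where B=1] simp: norm_exp_i_times)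
      also have "\<dots> = (\<integral>z. ?H \<omega> z \<partial>?Z)"
        by (simp add: exp_sum[symmetric] sum_distrib_left)
      finally show ?thesis .
    qed
    have "complex_of_real (dens K h s xs y) = (\<integral>\<omega>. C * (\<integral>z. ?H \<omega> z \<partial>?Z) \<partial>K)"
      unfolding dens_def integral_complex_of_real[symmetric] pt ..
    also have "\<dots> = C * (\<integral>\<omega>. \<integral>z. ?H \<omega> z \<partial>?Z \<partial>K)" by simp
    also have "(\<integral>\<omega>. \<integral>z. ?H \<omega> z \<partial>?Z \<partial>K) = (\<integral>z. \<integral>\<omega>. ?H \<omega> z \<partial>K \<partial>?Z)"
      using KZ.Fubini_integral[of "\<lambda>\<omega> z. ?H \<omega> z"] Hint by simp
    also have "\<dots> = (\<integral>z. (\<integral>u. iexp ((\<Sum>i<?m. y i * z i / s) - u) \<partial>distr K borel (\<lambda>\<omega>. \<Sum>i<?m. (z i / s) * h \<omega> (xs ! i))) \<partial>?Z)"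
    proof (rule Bochner_Integration.integral_cong[OF refl])
      fix z
      have "(\<integral>u. iexp ((\<Sum>i<?m. y i * z i / s) - u) \<partial>distr K borel (\<lambda>\<omega>. \<Sum>i<?m. (z i / s) * h \<omega> (xs ! i)))
          = (\<integral>\<omega>. iexp ((\<Sum>i<?m. y i * z i / s) - (\<Sum>i<?m. (z i / s) * h \<omega> (xs ! i))) \<partial>K)"
        by (subst integral_distr) auto
      also have "\<dots> = (\<integral>\<omega>. ?H \<omega> z \<partial>K)"
        by (intro Bochner_Integration.integral_cong refl arg_cong[where f=iexp])
           (simp add: sum_subtractf[symmetric] diff_divide_distrib algebra_simps)
      finally show "(\<integral>\<omega>. ?H \<omega> z \<partial>K) = (\<integral>u. iexp ((\<Sum>i<?m. y i * z i / s) - u) \<partial>distr K borel (\<lambda>\<omega>. \<Sum>i<?m. (z i / s) * h \<omega> (xs ! i)))" by simp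
    qed
    finally show ?thesis .
  qed
  have "complex_of_real (dens M f s xs y) = complex_of_real (dens N g s xs y)"
    unfolding gen[OF np] gen[OF nq] LAW ..
  then show ?thesis by simp
qed


theorem mainTheorem7:
  fixes M :: "'a measure" and f :: "'a \<Rightarrow> real \<Rightarrow> real" and s :: real
    and N :: "'b measure" and g :: "'b \<Rightarrow> real \<Rightarrow> real" and t :: real
  assumes "noisy_process M f s" and "noisy_process N g t"
  shows "(\<forall>J. J \<subseteq> {xs. xs \<noteq> []} \<and> dense_in_I J \<and> (\<forall>xs\<in>J. Px M f s xs = Px N g t xs)
            \<longrightarrow> (\<forall>xs. xs \<noteq> [] \<longrightarrow> Px M f s xs = Px N g t xs))
       \<and> (gaussian_process M f \<and> gaussian_process N g \<longrightarrow>
            (\<forall>n\<ge>2. \<forall>J. J \<subseteq> {xs. length xs = n} \<and> dense_in_Rn n J \<and>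
                (\<forall>xs\<in>J. Px M f s xs = Px N g t xs)
              \<longrightarrow> (\<forall>xs. xs \<noteq> [] \<longrightarrow> Px M f s xs = Px N g t xs)))"
proof (intro conjI allI impI)
  note np = assms(1) and nq = assms(2)
  fix J :: "real list set" and xs :: "real list"
  assume H: "J \<subseteq> {xs. xs \<noteq> []} \<and> dense_in_I J \<and> (\<forall>xs\<in>J. Px M f s xs = Px N g t xs)"
    and xs: "xs \<noteq> []"
  have D: "dense_in_Rn (length xs) J" using H xs unfolding dense_in_I_def by (simp add: Suc_le_eq)
  show "Px M f s xs = Px N g t xs"
    by (rule closure_eq[OF np nq D]) (use H in auto)
next
  note np = assms(1) and nq = assms(2)
  fix n :: nat and J :: "real list set" and xs :: "real list"
  assume G: "gaussian_process M f \<and> gaussian_process N g" and n2: "2 \<le> n"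
    and H: "J \<subseteq> {xs. length xs = n} \<and> dense_in_Rn n J \<and> (\<forall>xs\<in>J. Px M f s xs = Px N g t xs)"
    and xs: "xs \<noteq> []"
  have eqn: "Px M f s ys = Px N g t ys" if "length ys = n" for ys
    by (rule closure_eq[OF np nq _ _ that, of J]) (use H in auto)
  have st: "s = t" by (rule pair_laws(1)[OF np nq n2 eqn]) 
  have PL: "distr M borel (\<lambda>\<omega>. a * f \<omega> x + b * f \<omega> y) = distr N borel (\<lambda>\<omega>. a * g \<omega> x + b * g \<omega> y)" for a b x y
    by (rule pair_laws(2)[OF np nq n2 eqn])
  have P: "prob_space M" using np by (simp add: noisy_process_def)
  have Q: "prob_space N" using nq by (simp add: noisy_process_def)
  have LAW: "distr M borel (\<lambda>\<omega>. \<Sum>i<length xs. w i * f \<omega> (xs ! i)) = distr N borel (\<lambda>\<omega>. \<Sum>i<length xs. w i * g \<omega> (xs ! i))" for w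
    using G by (intro comb_laws[OF P _ Q _ PL]) auto
  have nq': "noisy_process N g s" using nq st by simp
  have "dens M f s xs y = dens N g s xs y" for y
    by (rule dens_eq_from_laws[OF np nq' LAW])
  then show "Px M f s xs = Px N g t xs"
    unfolding st[symmetric] Px_density[OF np] Px_density[OF nq'] by simp
qed

end
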